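(* Let $n\ge1$ and $s\ge 0$, and assume either $n$ is even and $s\le n$, or $n$ is odd and $s\le n-1$. Let $e$ be the greatest even integer with $e\le s$. Then $$\max\{\operatorname{per}(I-A): A\in\tilde\omega_n^s\}=2^{e/2}\Big[1+\Big(\frac{s-e}{2}\Big)^2\Big].$$ Moreover the maximum is attained by the doubly substochastic matrix $M_2\oplus\cdots\oplus M_2\oplus S_2\oplus\mathbf 0_{n-e-2}$ (with $e/2$ copies of $M_2$; when $s=e$ the factors $S_2$ and zero block may be replaced by $\mathbf 0_{n-e}$), where $M_2=\begin{pmatrix}0&1\\1&0\end{pmatrix}$ and $S_2=\begin{pmatrix}0&\frac{s-e}{2}\\\frac{s-e}{2}&0\end{pmatrix}$.
   Context: An $n\times n$ matrix is row substochastic if all entries are nonnegative and each row sum is at most $1$; doubly substochastic if additionally each column sum is at most $1$. $\sigma(A)$ is the sum of all entries of $A$, and $\tilde\omega_n^s$ is the set of $n\times n$ row substochastic matrices $A$ with $\sigma(A)=s$. $\oplus$ is block-diagonal direct sum, $\mathbf 0_m$ the $m\times m$ zero matrix. The permanent is $\operatorname{per}(M)=\sum_{\pi\in S_n}\prod_i m_{i\pi(i)}$, and $I$ is the identity matrix. *)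

theory Defs
  imports Complex_Main "HOL-Combinatorics.Permutations"
begin

text \<open>Square n-by-n real matrices are represented as functions nat \<Rightarrow> nat \<Rightarrow> real,
  of which only the entries with indices below n are relevant (indices 0..n-1).\<close>

type_synonym mat = "nat \<Rightarrow> nat \<Rightarrow> real"

definition row_substochastic :: "nat \<Rightarrow> mat \<Rightarrow> bool" where
  "row_substochastic n A \<longleftrightarrow>
     (\<forall>i<n. \<forall>j<n. 0 \<le> A i j) \<and> (\<forall>i<n. (\<Sum>j<n. A i j) \<le> 1)"

definition doubly_substochastic :: "nat \<Rightarrow> mat \<Rightarrow> bool" where
  "doubly_substochastic n A \<longleftrightarrow>
     row_substochastic n A \<and> (\<forall>j<n. (\<Sum>i<n. A i j) \<le> 1)"

definition msum :: "nat \<Rightarrow> mat \<Rightarrow> real" where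
  "msum n A = (\<Sum>i<n. \<Sum>j<n. A i j)"

definition tilde_omega :: "nat \<Rightarrow> real \<Rightarrow> mat set" where
  "tilde_omega n s = {A. row_substochastic n A \<and> msum n A = s}"

definition per :: "nat \<Rightarrow> mat \<Rightarrow> real" where
  "per n M = (\<Sum>p | p permutes {..<n}. \<Prod>i<n. M i (p i))"

definition idm :: mat where
  "idm i j = (if i = j then 1 else 0)"

definition msub :: "mat \<Rightarrow> mat \<Rightarrow> mat" where
  "msub A B i j = A i j - B i j"

definition dsum :: "nat \<Rightarrow> mat \<Rightarrow> mat \<Rightarrow> mat" where
  "dsum m A B i j =
     (if i < m \<and> j < m then A i j
      else if m \<le> i \<and> m \<le> j then B (i - m) (j - m) else 0)"

definition zero_mat :: mat where
  "zero_mat i j = 0"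

definition M2 :: mat where
  "M2 i j = (if i < 2 \<and> j < 2 \<and> i \<noteq> j then 1 else 0)"

definition S2 :: "real \<Rightarrow> mat" where
  "S2 c i j = (if i < 2 \<and> j < 2 \<and> i \<noteq> j then c else 0)"

fun copies2 :: "nat \<Rightarrow> mat \<Rightarrow> mat \<Rightarrow> mat" where
  "copies2 0 B C = C"
| "copies2 (Suc k) B C = dsum 2 B (copies2 k B C)"

definition greatest_even_le :: "real \<Rightarrow> int" where
  "greatest_even_le s = (GREATEST k::int. even k \<and> real_of_int k \<le> s)"

end

theory Submission
  imports Defs
begin


definition P :: "nat set \<Rightarrow> mat \<Rightarrow> real" where
  "P S M = (\<Sum>p | p permutes S. \<Prod>i\<in>S. M i (p i))"

lemma per_P: "per n M = P {..<n} M"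
  by (simp add: per_def P_def)

lemma P_cong:
  assumes "\<And>i k. i \<in> S \<Longrightarrow> k \<in> S \<Longrightarrow> M i k = N i k"
  shows "P S M = P S N"
  unfolding P_def
proof (rule sum.cong[OF refl])
  fix p assume "p \<in> {p. p permutes S}"
  then have p: "p permutes S" by simp
  show "(\<Prod>i\<in>S. M i (p i)) = (\<Prod>i\<in>S. N i (p i))"
    by (rule prod.cong[OF refl]) (simp add: assms permutes_in_image[OF p])
qed

lemma P_empty[simp]: "P {} M = 1"
  by (simp add: P_def)

lemma P_nonneg:
  assumes "\<And>i k. i \<in> S \<Longrightarrow> k \<in> S \<Longrightarrow> 0 \<le> M i k"
  shows "0 \<le> P S M"
  unfolding P_def
proof (rule sum_nonneg)
  fix p assume "p \<in> {p. p permutes S}"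
  then have p: "p permutes S" by simp
  show "0 \<le> (\<Prod>i\<in>S. M i (p i))"
    by (rule prod_nonneg) (simp add: assms permutes_in_image[OF p])
qed

lemma P_zero_col:
  assumes "finite S" "b \<in> S" "\<And>k. k \<in> S \<Longrightarrow> M k b = 0"
  shows "P S M = 0"
  unfolding P_def
proof (rule sum.neutral, rule ballI)
  fix p assume "p \<in> {p. p permutes S}"
  then have p: "p permutes S" by simp
  have "inv p b \<in> S" using permutes_in_image[OF permutes_inv[OF p]] assms(2) by simp
  moreover have "p (inv p b) = b" using permutes_inverses(1)[OF p] by simp
  ultimately show "(\<Prod>i\<in>S. M i (p i)) = 0"
    using assms by (intro prod_zero) (auto intro!: bexI[of _ "inv p b"])
qed

definition colrep :: "mat \<Rightarrow> nat \<Rightarrow> nat \<Rightarrow> mat" where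
  "colrep M a b = (\<lambda>i k. if k = b then M i a else M i k)"

lemma P_expand:
  assumes fS: "finite S" and aS: "a \<notin> S"
  shows "P (insert a S) M = M a a * P S M + (\<Sum>b\<in>S. M a b * P S (colrep M a b))"
proof -
  have "P (insert a S) M =
     (\<Sum>b\<in>insert a S. \<Sum>q | q permutes S. \<Prod>i\<in>insert a S. M i ((transpose a b \<circ> q) i))"
    unfolding P_def by (rule sum_over_permutations_insert[OF fS aS])
  also have "\<dots> = (\<Sum>b\<in>insert a S. M a b * P S (colrep M a b))"
  proof (rule sum.cong[OF refl])
    fix b assume b: "b \<in> insert a S"
    have "(\<Sum>q | q permutes S. \<Prod>i\<in>insert a S. M i ((transpose a b \<circ> q) i))
       = (\<Sum>q | q permutes S. M a b * (\<Prod>i\<in>S. colrep M a b i (q i)))"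
    proof (rule sum.cong[OF refl])
      fix q assume "q \<in> {q. q permutes S}"
      then have q: "q permutes S" by simp
      have qa: "q a = a" using q aS by (simp add: permutes_def)
      have "(\<Prod>i\<in>insert a S. M i ((transpose a b \<circ> q) i))
          = M a b * (\<Prod>i\<in>S. M i ((transpose a b \<circ> q) i))"
        using fS aS qa by (simp add: prod.insert)
      also have "(\<Prod>i\<in>S. M i ((transpose a b \<circ> q) i)) = (\<Prod>i\<in>S. colrep M a b i (q i))"
      proof (rule prod.cong[OF refl])
        fix i assume i: "i \<in> S"
        have "q i \<in> S" using permutes_in_image[OF q] i by simp
        then have "q i \<noteq> a" using aS by auto
        then show "M i ((transpose a b \<circ> q) i) = colrep M a b i (q i)"
          by (auto simp: colrep_def transpose_def)
      qed
      finally show "(\<Prod>i\<in>insert a S. M i ((transpose a b \<circ> q) i)) = M a b * (\<Prod>i\<in>S. colrep M a b i (q i))" .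
    qed
    also have "\<dots> = M a b * P S (colrep M a b)"
      by (simp add: P_def sum_distrib_left)
    finally show "(\<Sum>q | q permutes S. \<Prod>i\<in>insert a S. M i ((transpose a b \<circ> q) i)) = M a b * P S (colrep M a b)" .
  qed
  also have "\<dots> = M a a * P S (colrep M a a) + (\<Sum>b\<in>S. M a b * P S (colrep M a b))"
    using fS aS by (simp add: sum.insert)
  also have "colrep M a a = M" by (auto simp: colrep_def fun_eq_iff)
  finally show ?thesis .
qed

lemma P_remove_col:
  assumes fS: "finite S" and jS: "j \<in> S" and z: "\<And>k. k \<in> S \<Longrightarrow> k \<noteq> j \<Longrightarrow> M k j = 0"
  shows "P S M = M j j * P (S - {j}) M"
proof -
  have S: "S = insert j (S - {j})" using jS by auto
  have "P S M = M j j * P (S - {j}) M + (\<Sum>b\<in>S-{j}. M j b * P (S-{j}) (colrep M j b))"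
    by (subst S, rule P_expand) (use fS in auto)
  also have "(\<Sum>b\<in>S-{j}. M j b * P (S-{j}) (colrep M j b)) = 0"
  proof (rule sum.neutral, rule ballI)
    fix b assume b: "b \<in> S - {j}"
    have "P (S-{j}) (colrep M j b) = 0"
      by (rule P_zero_col[of _ b]) (use fS b z in \<open>auto simp: colrep_def\<close>)
    then show "M j b * P (S-{j}) (colrep M j b) = 0" by simp
  qed
  finally show ?thesis by simp
qed

lemma P_diag_lin:
  assumes fT: "finite T" and jT: "j \<in> T"
  shows "P T X = P T (X(j := (X j)(j := 1))) - (1 - X j j) * P (T - {j}) X"
proof -
  let ?X' = "X(j := (X j)(j := 1))"
  have T: "T = insert j (T - {j})" using jT by auto
  have e1: "P T X = X j j * P (T - {j}) X + (\<Sum>b\<in>T-{j}. X j b * P (T-{j}) (colrep X j b))"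
    by (subst T, rule P_expand) (use fT in auto)
  have e2: "P T ?X' = ?X' j j * P (T - {j}) ?X' + (\<Sum>b\<in>T-{j}. ?X' j b * P (T-{j}) (colrep ?X' j b))"
    by (subst T, rule P_expand) (use fT in auto)
  have c1: "P (T - {j}) ?X' = P (T - {j}) X" by (rule P_cong) auto
  have c2: "P (T-{j}) (colrep ?X' j b) = P (T-{j}) (colrep X j b)" for b
    by (rule P_cong) (auto simp: colrep_def)
  have c3: "(\<Sum>b\<in>T-{j}. ?X' j b * P (T-{j}) (colrep ?X' j b)) = (\<Sum>b\<in>T-{j}. X j b * P (T-{j}) (colrep X j b))"
    by (rule sum.cong) (auto simp: c2)
  show ?thesis using e1 e2 c1 c3 by (simp add: algebra_simps)
qed




lemma ge_alt: "greatest_even_le x = 2 * \<lfloor>x/2\<rfloor>"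
  unfolding greatest_even_le_def
proof (rule Greatest_equality)
  show "even (2 * \<lfloor>x / 2\<rfloor>) \<and> real_of_int (2 * \<lfloor>x / 2\<rfloor>) \<le> x"
    by (simp; linarith)
  fix y :: int assume "even y \<and> real_of_int y \<le> x"
  then obtain z where y: "y = 2 * z" and "real_of_int y \<le> x" by (auto elim: evenE)
  then have "real_of_int z \<le> x / 2" by simp
  then have "z \<le> \<lfloor>x/2\<rfloor>" by (simp add: le_floor_iff)
  then show "y \<le> 2 * \<lfloor>x / 2\<rfloor>" using y by simp
qed

definition fb :: "real \<Rightarrow> real" where
  "fb x = 2 ^ nat (greatest_even_le x div 2) * (1 + ((x - real_of_int (greatest_even_le x)) / 2)^2)"

lemma fb_alt: "fb x = 2 ^ nat \<lfloor>x/2\<rfloor> * (1 + (x/2 - \<lfloor>x/2\<rfloor>)^2)"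
  unfolding fb_def ge_alt by (simp add: field_simps)

lemma fb_ge1: assumes "0 \<le> x" shows "1 \<le> fb x"
proof -
  have "(1::real) \<le> 2 ^ nat \<lfloor>x/2\<rfloor>" by simp
  moreover have "1 \<le> 1 + (x/2 - \<lfloor>x/2\<rfloor>)^2" by simp
  ultimately show ?thesis unfolding fb_alt
    by (metis mult_mono' mult_1 zero_le_one)
qed

lemma fb_mono: assumes "0 \<le> x" "x \<le> y" shows "fb x \<le> fb y"
proof -
  define m where "m = \<lfloor>x/2\<rfloor>"
  define m' where "m' = \<lfloor>y/2\<rfloor>"
  define u where "u = x/2 - m"
  define u' where "u' = y/2 - m'"
  have m0: "0 \<le> m" using assms unfolding m_def by simp
  have mm: "m \<le> m'" unfolding m_def m'_def using assms by (intro floor_mono) simp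
  have u: "0 \<le> u" "u < 1" unfolding u_def m_def by linarith+
  have u': "0 \<le> u'" "u' < 1" unfolding u'_def m'_def by linarith+
  have fx: "fb x = 2 ^ nat m * (1 + u^2)" unfolding fb_alt m_def u_def ..
  have fy: "fb y = 2 ^ nat m' * (1 + u'^2)" unfolding fb_alt m'_def u'_def ..
  show ?thesis
  proof (cases "m = m'")
    case True
    then have "u \<le> u'" unfolding u_def u'_def using assms by simp
    then have "u^2 \<le> u'^2" using u by (intro power_mono) auto
    then show ?thesis unfolding fx fy True by simp
  next
    case False
    then have "nat m + 1 \<le> nat m'" using mm m0 by linarith
    then have pp: "(2::real) ^ (nat m + 1) \<le> 2 ^ nat m'" by (intro power_increasing) auto
    have "1 + u^2 \<le> 2" using u by (simp add: power_le_one)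
    then have "2 ^ nat m * (1 + u^2) \<le> (2::real) ^ nat m * 2"
      by (intro mult_left_mono) auto
    also have "\<dots> = 2 ^ (nat m + 1)" by simp
    finally have "2 ^ nat m * (1 + u^2) \<le> (2::real) ^ nat m'"
      using pp by linarith
    also have "\<dots> \<le> 2 ^ nat m' * (1 + u'^2)" by simp
    finally show ?thesis unfolding fx fy .
  qed
qed

lemma key_ineq:
  fixes u v :: real
  assumes "0 \<le> u" "u \<le> 1" "0 \<le> v" "v \<le> 1" "1 \<le> u + v"
  shows "(1 + v^2) * (1 + u^2) \<le> 2 * (1 + (u + v - 1)^2)"
proof -
  have h1: "0 \<le> (1 - u) * (1 - v)" using assms by simp
  have h2: "0 \<le> u * v" using assms by simp
  have h3: "u * v \<le> 1" using assms by (simp add: mult_le_one)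
  have h4: "0 \<le> (u*v - (u+v-1)) * (2 - u*v - (u+v-1))"
    using h1 h3 assms by (intro mult_nonneg_nonneg) (auto simp: algebra_simps)
  show ?thesis using h4 by (simp add: power2_eq_square algebra_simps)
qed

lemma fb_pair:
  assumes "0 \<le> v" "v \<le> 1" "0 \<le> R"
  shows "(1 + v^2) * fb R \<le> fb (2*v + R)"
proof -
  define m where "m = \<lfloor>R/2\<rfloor>"
  define u where "u = R/2 - m"
  have m0: "0 \<le> m" using assms unfolding m_def by simp
  have u: "0 \<le> u" "u < 1" unfolding u_def m_def by linarith+
  have fR: "fb R = 2 ^ nat m * (1 + u^2)" unfolding fb_alt m_def u_def ..
  have hh: "(2*v + R)/2 = m + (u + v)" unfolding u_def using assms by simp
  show ?thesis
  proof (cases "u + v < 1")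
    case True
    have fl: "\<lfloor>m + (u + v)\<rfloor> = m" using True u assms
      by (simp add: floor_eq_iff)
    have f2: "fb (2*v+R) = 2 ^ nat m * (1 + (u+v)^2)" unfolding fb_alt hh fl by simp
    have "u * v \<le> 1" using u assms by (simp add: mult_le_one)
    moreover have "0 \<le> u * v" using u assms by simp
    ultimately have "(u*v) * (u*v) \<le> 1 * (u * v)" by (intro mult_right_mono) auto
    then have "(1 + v^2) * (1 + u^2) \<le> 1 + (u+v)^2"
      using \<open>0 \<le> u * v\<close> by (simp add: power2_eq_square algebra_simps)
    then have "2 ^ nat m * ((1 + v^2) * (1 + u^2)) \<le> 2 ^ nat m * (1 + (u+v)^2)"
      by (intro mult_left_mono) auto
    then show ?thesis unfolding fR f2 by (simp add: algebra_simps)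
  next
    case False
    have fl: "\<lfloor>m + (u + v)\<rfloor> = m + 1" using False u assms
      by (simp add: floor_eq_iff)
    have f2: "fb (2*v+R) = 2 ^ nat (m+1) * (1 + (u+v-1)^2)" unfolding fb_alt hh fl by simp
    have n: "nat (m+1) = Suc (nat m)" using m0 by simp
    have "(1 + v^2) * (1 + u^2) \<le> 2 * (1 + (u + v - 1)^2)"
      using key_ineq[of u v] u assms False by simp
    then have "2 ^ nat m * ((1 + v^2) * (1 + u^2)) \<le> 2 ^ nat m * (2 * (1 + (u + v - 1)^2))"
      by (intro mult_left_mono) auto
    then show ?thesis unfolding fR f2 n by (simp add: algebra_simps)
  qed
qed

lemma fb_cycle2:
  assumes "0 \<le> a" "a \<le> 1" "0 \<le> b" "b \<le> 1" "0 \<le> R"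
  shows "(1 + a*b) * fb R \<le> fb (a + b + R)"
proof -
  have "a * b \<le> ((a+b)/2)^2"
    using sum_squares_ge_zero[of "a-b" 0] by (simp add: power2_eq_square field_simps)
  then have "(1 + a*b) * fb R \<le> (1 + ((a+b)/2)^2) * fb R"
    using fb_ge1[OF assms(5)] by (intro mult_right_mono) auto
  also have "\<dots> \<le> fb (2*((a+b)/2) + R)" using assms by (intro fb_pair) auto
  also have "2*((a+b)/2) + R = a + b + R" by simp
  finally show ?thesis .
qed




definition Fm :: "(nat \<Rightarrow> nat) \<Rightarrow> (nat \<Rightarrow> real) \<Rightarrow> mat" where
  "Fm \<phi> r i k = (if i = k then 1 else if k = \<phi> i then r i else 0)"

lemma func_bound:
  assumes "finite S" "\<And>i. i \<in> S \<Longrightarrow> 0 \<le> r i \<and> r i \<le> 1"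
  shows "P S (Fm \<phi> r) \<le> fb (\<Sum>i\<in>S. r i)"
  using assms
proof (induction "card S" arbitrary: S \<phi> r rule: less_induct)
  case less
  note fS = less.prems(1) and rS = less.prems(2)
  let ?M = "Fm \<phi> r"
  have sum0: "0 \<le> (\<Sum>i\<in>T. r i)" if "T \<subseteq> S" for T
    using rS that by (intro sum_nonneg) auto
  show ?case
  proof (cases "\<exists>j\<in>S. \<forall>k\<in>S. k \<noteq> j \<longrightarrow> \<phi> k \<noteq> j")
    case True
    then obtain j where jS: "j \<in> S" and nj: "\<And>k. k \<in> S \<Longrightarrow> k \<noteq> j \<Longrightarrow> \<phi> k \<noteq> j" by blast
    have "P S ?M = ?M j j * P (S - {j}) ?M"
      by (rule P_remove_col[OF fS jS]) (auto simp: Fm_def dest: nj)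
    also have "\<dots> = P (S - {j}) ?M" by (simp add: Fm_def)
    also have "\<dots> \<le> fb (\<Sum>i\<in>S-{j}. r i)"
      using less.hyps[of "S - {j}" r \<phi>] fS jS rS card_Diff1_less[OF fS jS] by simp
    also have "\<dots> \<le> fb (\<Sum>i\<in>S. r i)"
    proof (rule fb_mono)
      show "0 \<le> (\<Sum>i\<in>S-{j}. r i)" by (rule sum0) auto
      show "(\<Sum>i\<in>S-{j}. r i) \<le> (\<Sum>i\<in>S. r i)"
        using fS jS rS by (intro sum_mono2) auto
    qed
    finally show ?thesis .
  next
    case False
    show ?thesis
    proof (cases "S = {}")
      case True then show ?thesis using fb_ge1[of 0] by simp
    next
      case Sne: False
      have inS: "\<forall>j\<in>S. \<exists>k\<in>S. k \<noteq> j \<and> \<phi> k = j" using False by blast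
      then have "S \<subseteq> \<phi> ` S" by (metis image_eqI subsetI)
      then have "card S \<le> card (\<phi> ` S)" using fS by (intro card_mono) auto
      then have "card (\<phi> ` S) = card S" using card_image_le[OF fS, of \<phi>] by linarith
      then have inj: "inj_on \<phi> S" using fS by (simp add: eq_card_imp_inj_on)
      obtain j where jS: "j \<in> S" using Sne by blast
      obtain a where aS: "a \<in> S" and aj: "a \<noteq> j" and pa: "\<phi> a = j" using inS jS by blast
      have uniq: "\<And>k. k \<in> S \<Longrightarrow> \<phi> k = j \<Longrightarrow> k = a" using inj aS pa by (metis inj_on_eq_iff)
      define T where "T = S - {a}"
      have fT: "finite T" using fS by (simp add: T_def)
      have jT: "j \<in> T" using jS aj by (simp add: T_def)
      have S_eq: "S = insert a T" using aS by (auto simp: T_def)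
      have aT: "a \<notin> T" by (simp add: T_def)
      define t where "t = (if \<phi> j = a then r j else 0)"
      define Mj where "Mj = colrep ?M a j"
      have Maa: "?M a a = 1" by (simp add: Fm_def)
      have e1: "P S ?M = P T ?M + r a * P T Mj"
      proof -
        have "P S ?M = ?M a a * P T ?M + (\<Sum>b\<in>T. ?M a b * P T (colrep ?M a b))"
          unfolding S_eq by (rule P_expand[OF fT aT])
        also have "(\<Sum>b\<in>T. ?M a b * P T (colrep ?M a b)) = (\<Sum>b\<in>T. if b = j then r a * P T Mj else 0)"
          by (rule sum.cong) (use aj aT in \<open>auto simp: Fm_def pa Mj_def\<close>)
        also have "\<dots> = r a * P T Mj" using fT jT by simp
        finally show ?thesis using Maa by simp
      qed
      have e2: "P T ?M = P (T - {j}) ?M"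
      proof -
        have "P T ?M = ?M j j * P (T - {j}) ?M"
        proof (rule P_remove_col[OF fT jT])
          fix k assume "k \<in> T" "k \<noteq> j"
          then show "?M k j = 0" using uniq by (auto simp: Fm_def T_def)
        qed
        moreover have "?M j j = 1" by (simp add: Fm_def)
        ultimately show ?thesis by simp
      qed
      have Mjjj: "Mj j j = t" using aj by (auto simp: Mj_def colrep_def Fm_def t_def)
      define D where "D = Mj(j := (Mj j)(j := 1))"
      have e3: "P T Mj = P T D - (1 - t) * P (T - {j}) Mj"
        unfolding D_def using P_diag_lin[OF fT jT, of Mj] Mjjj by simp
      have e4: "P (T - {j}) Mj = P (T - {j}) ?M"
        by (rule P_cong) (auto simp: Mj_def colrep_def)
      define \<phi>' where "\<phi>' = (\<lambda>k. if \<phi> k = a then j else \<phi> k)"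
      define r' where "r' = (\<lambda>k. if k = j \<and> \<phi> j = a then 0 else r k)"
      have e5: "P T D = P T (Fm \<phi>' r')"
      proof (rule P_cong)
        fix i k assume iT: "i \<in> T" and kT: "k \<in> T"
        have ia: "i \<noteq> a" "k \<noteq> a" using iT kT by (auto simp: T_def)
        have iS: "i \<in> S" using iT by (simp add: T_def)
        show "D i k = Fm \<phi>' r' i k"
        proof (cases "i = k")
          case True then show ?thesis by (simp add: D_def Mj_def colrep_def Fm_def)
        next
          case ik: False
          show ?thesis
          proof (cases "k = j")
            case True
            have "\<phi> i \<noteq> j" using uniq[OF iS] ia by auto
            have "D i k = ?M i a" using True ik by (simp add: D_def Mj_def colrep_def)
            also have "\<dots> = (if \<phi> i = a then r i else 0)" using ia ik by (simp add: Fm_def)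
            also have "\<dots> = Fm \<phi>' r' i k" using True ik ia \<open>\<phi> i \<noteq> j\<close>
              by (simp add: Fm_def \<phi>'_def r'_def)
            finally show ?thesis .
          next
            case False
            have "D i k = ?M i k" using False ik by (simp add: D_def Mj_def colrep_def)
            also have "\<dots> = Fm \<phi>' r' i k" using False ik ia
              by (simp add: Fm_def \<phi>'_def r'_def)
            finally show ?thesis .
          qed
        qed
      qed
      have rT: "\<And>i. i \<in> T \<Longrightarrow> 0 \<le> r' i \<and> r' i \<le> 1" using rS by (auto simp: r'_def T_def)
      have cT: "card T < card S" unfolding T_def by (rule card_Diff1_less[OF fS aS])
      have cTj: "card (T - {j}) < card S" using cT fT jT
        by (meson card_Diff1_less less_trans)
      have b1: "P T (Fm \<phi>' r') \<le> fb (\<Sum>i\<in>T. r' i)"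
        using less.hyps[OF cT fT rT] .
      have b2: "P (T - {j}) ?M \<le> fb (\<Sum>i\<in>T-{j}. r i)"
        using less.hyps[OF cTj] fT rS by (auto simp: T_def)
      define R where "R = (\<Sum>i\<in>T-{j}. r i)"
      have R0: "0 \<le> R" unfolding R_def by (rule sum0) (auto simp: T_def)
      have sT: "(\<Sum>i\<in>T. r i) = r j + R" unfolding R_def using fT jT by (simp add: sum.remove)
      have sS: "(\<Sum>i\<in>S. r i) = r a + r j + R" unfolding S_eq using fT aT sT by simp
      have sT': "(\<Sum>i\<in>T. r' i) = r j + R - t"
      proof -
        have "(\<Sum>i\<in>T. r' i) = r' j + (\<Sum>i\<in>T-{j}. r' i)" using fT jT by (simp add: sum.remove)
        also have "(\<Sum>i\<in>T-{j}. r' i) = R" unfolding R_def by (rule sum.cong) (auto simp: r'_def)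
        finally show ?thesis by (simp add: r'_def t_def)
      qed
      have ra: "0 \<le> r a" "r a \<le> 1" and rj: "0 \<le> r j" "r j \<le> 1" using rS aS jS by auto
      have main: "P S ?M = (1 - r a + r a * t) * P (T - {j}) ?M + r a * P T (Fm \<phi>' r')"
        using e1 e2 e3 e4 e5 by (simp add: algebra_simps)
      have coef: "0 \<le> 1 - r a + r a * t" using ra rj by (auto simp: t_def)
      have "P S ?M \<le> (1 - r a + r a * t) * fb R + r a * fb (r j + R - t)"
        unfolding main using b1 b2 coef ra sT' R_def
        by (intro add_mono mult_left_mono) auto
      also have "\<dots> \<le> fb (\<Sum>i\<in>S. r i)"
      proof (cases "\<phi> j = a")
        case True
        then have "(1 - r a + r a * t) * fb R + r a * fb (r j + R - t) = (1 + r a * r j) * fb R"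
          by (simp add: t_def algebra_simps)
        also have "\<dots> \<le> fb (r a + r j + R)" using fb_cycle2 ra rj R0 by blast
        finally show ?thesis using sS by simp
      next
        case False
        then have t0: "t = 0" by (simp add: t_def)
        have f1: "fb R \<le> fb (\<Sum>i\<in>S. r i)" using sS R0 ra rj by (intro fb_mono) auto
        have f2: "fb (r j + R) \<le> fb (\<Sum>i\<in>S. r i)" using sS R0 ra rj by (intro fb_mono) auto
        have "(1 - r a) * fb R + r a * fb (r j + R) \<le> (1 - r a) * fb (\<Sum>i\<in>S. r i) + r a * fb (\<Sum>i\<in>S. r i)"
          using ra f1 f2 by (intro add_mono mult_left_mono) auto
        then show ?thesis using t0 by (simp add: algebra_simps)
      qed
      finally show ?thesis .
    qed
  qed
qed




definition CA :: "mat \<Rightarrow> mat" where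
  "CA A = (\<lambda>i k. if i = k then 1 else A i k)"

definition soff :: "nat set \<Rightarrow> mat \<Rightarrow> real" where
  "soff S A = (\<Sum>i\<in>S. \<Sum>k\<in>S-{i}. A i k)"

definition rowf :: "nat set \<Rightarrow> mat \<Rightarrow> nat \<Rightarrow> bool" where
  "rowf S A i \<longleftrightarrow> (\<exists>c. \<forall>k\<in>S. k \<noteq> i \<longrightarrow> k \<noteq> c \<longrightarrow> A i k = 0)"

lemma P_row_lin:
  assumes fS: "finite S" and iS: "i \<in> S"
    and row: "\<And>l. l \<in> S \<Longrightarrow> X i l = (\<Sum>k\<in>K. w k * Y k i l)"
    and other: "\<And>k m l. k \<in> K \<Longrightarrow> m \<in> S \<Longrightarrow> m \<noteq> i \<Longrightarrow> l \<in> S \<Longrightarrow> Y k m l = X m l"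
  shows "P S X = (\<Sum>k\<in>K. w k * P S (Y k))"
proof -
  have "P S X = (\<Sum>p | p permutes S. \<Sum>k\<in>K. w k * (\<Prod>m\<in>S. Y k m (p m)))"
    unfolding P_def
  proof (rule sum.cong[OF refl])
    fix p assume "p \<in> {p. p permutes S}"
    then have p: "p permutes S" by simp
    have pin: "\<And>m. m \<in> S \<Longrightarrow> p m \<in> S" using permutes_in_image[OF p] by simp
    have "(\<Prod>m\<in>S. X m (p m)) = X i (p i) * (\<Prod>m\<in>S-{i}. X m (p m))"
      using fS iS by (simp add: prod.remove)
    also have "\<dots> = (\<Sum>k\<in>K. w k * Y k i (p i)) * (\<Prod>m\<in>S-{i}. X m (p m))"
      using row pin iS by simp
    also have "\<dots> = (\<Sum>k\<in>K. w k * (Y k i (p i) * (\<Prod>m\<in>S-{i}. Y k m (p m))))"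
      unfolding sum_distrib_right
    proof (rule sum.cong[OF refl])
      fix k assume k: "k \<in> K"
      have "(\<Prod>m\<in>S-{i}. X m (p m)) = (\<Prod>m\<in>S-{i}. Y k m (p m))"
        using other[OF k] pin by (intro prod.cong) auto
      then show "w k * Y k i (p i) * (\<Prod>m\<in>S-{i}. X m (p m)) = w k * (Y k i (p i) * (\<Prod>m\<in>S-{i}. Y k m (p m)))"
        by simp
    qed
    also have "\<dots> = (\<Sum>k\<in>K. w k * (\<Prod>m\<in>S. Y k m (p m)))"
      using fS iS by (simp add: prod.remove)
    finally show "(\<Prod>m\<in>S. X m (p m)) = (\<Sum>k\<in>K. w k * (\<Prod>m\<in>S. Y k m (p m)))" .
  qed
  also have "\<dots> = (\<Sum>k\<in>K. \<Sum>p | p permutes S. w k * (\<Prod>m\<in>S. Y k m (p m)))"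
    by (rule sum.swap)
  also have "\<dots> = (\<Sum>k\<in>K. w k * P S (Y k))"
    by (simp add: P_def sum_distrib_left)
  finally show ?thesis .
qed

lemma all_rowf_bound:
  assumes fS: "finite S"
    and nn: "\<And>i k. i \<in> S \<Longrightarrow> k \<in> S \<Longrightarrow> i \<noteq> k \<Longrightarrow> 0 \<le> A i k"
    and rs: "\<And>i. i \<in> S \<Longrightarrow> (\<Sum>k\<in>S-{i}. A i k) \<le> 1"
    and rf: "\<And>i. i \<in> S \<Longrightarrow> rowf S A i"
  shows "P S (CA A) \<le> fb (soff S A)"
proof -
  define \<phi> where "\<phi> i = (SOME c. \<forall>k\<in>S. k \<noteq> i \<longrightarrow> k \<noteq> c \<longrightarrow> A i k = 0)" for i
  define r where "r i = (\<Sum>k\<in>S-{i}. A i k)" for i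
  have phi: "\<And>i k. i \<in> S \<Longrightarrow> k \<in> S \<Longrightarrow> k \<noteq> i \<Longrightarrow> k \<noteq> \<phi> i \<Longrightarrow> A i k = 0"
  proof -
    fix i k assume "i \<in> S" "k \<in> S" "k \<noteq> i" "k \<noteq> \<phi> i"
    moreover have "\<forall>k\<in>S. k \<noteq> i \<longrightarrow> k \<noteq> \<phi> i \<longrightarrow> A i k = 0"
      unfolding \<phi>_def using rf[OF \<open>i \<in> S\<close>] unfolding rowf_def by (rule someI_ex)
    ultimately show "A i k = 0" by blast
  qed
  have eq: "P S (CA A) = P S (Fm \<phi> r)"
  proof (rule P_cong)
    fix i k assume iS: "i \<in> S" and kS: "k \<in> S"
    show "CA A i k = Fm \<phi> r i k"
    proof (cases "i = k")
      case True then show ?thesis by (simp add: CA_def Fm_def)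
    next
      case False
      show ?thesis
      proof (cases "k = \<phi> i")
        case True
        have "r i = A i k + (\<Sum>l\<in>S-{i}-{k}. A i l)"
          unfolding r_def using fS kS False by (simp add: sum.remove)
        also have "(\<Sum>l\<in>S-{i}-{k}. A i l) = 0"
          using phi[OF iS] True by (intro sum.neutral) auto
        finally show ?thesis using True False by (simp add: CA_def Fm_def)
      next
        case k2: False
        then show ?thesis using phi[OF iS kS] False by (simp add: CA_def Fm_def)
      qed
    qed
  qed
  have "P S (Fm \<phi> r) \<le> fb (\<Sum>i\<in>S. r i)"
  proof (rule func_bound[OF fS])
    fix i assume "i \<in> S"
    then show "0 \<le> r i \<and> r i \<le> 1" using rs nn unfolding r_def by (auto intro: sum_nonneg)
  qed
  then show ?thesis using eq by (simp add: soff_def r_def)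
qed

lemma red_bound:
  assumes fT: "finite T"
  shows "finite S \<Longrightarrow> T \<subseteq> S
    \<Longrightarrow> (\<And>i k. i \<in> S \<Longrightarrow> k \<in> S \<Longrightarrow> i \<noteq> k \<Longrightarrow> 0 \<le> A i k)
    \<Longrightarrow> (\<And>i. i \<in> S \<Longrightarrow> (\<Sum>k\<in>S-{i}. A i k) \<le> 1)
    \<Longrightarrow> (\<And>i. i \<in> S - T \<Longrightarrow> rowf S A i)
    \<Longrightarrow> P S (CA A) \<le> fb (soff S A)"
  using fT
proof (induction T arbitrary: A rule: finite_induct)
  case empty
  then show ?case using all_rowf_bound[of S A] by auto
next
  case (insert i T)
  note fS = insert.prems(1) and TS = insert.prems(2) and nn = insert.prems(3)
    and rs = insert.prems(4) and rf = insert.prems(5)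
  have iS: "i \<in> S" using TS by auto
  define r where "r = (\<Sum>k\<in>S-{i}. A i k)"
  show ?case
  proof (cases "r = 0")
    case True
    have z: "\<And>k. k \<in> S - {i} \<Longrightarrow> A i k = 0"
      using True unfolding r_def using fS nn iS
      by (subst (asm) sum_nonneg_eq_0_iff) auto
    have "rowf S A i" unfolding rowf_def using z by auto
    then show ?thesis using insert.IH[OF fS _ nn rs] TS rf by auto
  next
    case False
    have r0: "0 < r" using False nn iS unfolding r_def
      by (metis (no_types, lifting) DiffD1 DiffD2 insertI1 order_le_less sum_nonneg)
    define Y where "Y k = A(i := (\<lambda>l. if l = k then r else 0))" for k
    have lin: "P S (CA A) = (\<Sum>k\<in>S-{i}. (A i k / r) * P S (CA (Y k)))"
    proof (rule P_row_lin[OF fS iS])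
      fix l assume lS: "l \<in> S"
      show "CA A i l = (\<Sum>k\<in>S-{i}. A i k / r * CA (Y k) i l)"
      proof (cases "l = i")
        case True
        have "(\<Sum>k\<in>S-{i}. A i k / r * CA (Y k) i l) = (\<Sum>k\<in>S-{i}. A i k) / r"
          using True by (simp add: CA_def sum_divide_distrib)
        then show ?thesis using True r0 by (simp add: CA_def r_def)
      next
        case li: False
        have "(\<Sum>k\<in>S-{i}. A i k / r * CA (Y k) i l) = (\<Sum>k\<in>S-{i}. if k = l then A i k else 0)"
          using li r0 by (intro sum.cong) (auto simp: CA_def Y_def)
        also have "\<dots> = A i l" using fS lS li by simp
        finally show ?thesis using li by (simp add: CA_def)
      qed
    next
      fix k m l assume "m \<noteq> i"
      then show "CA (Y k) m l = CA A m l" by (simp add: CA_def Y_def)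
    qed
    have bnd: "P S (CA (Y k)) \<le> fb (soff S A)" if kS: "k \<in> S - {i}" for k
    proof -
      have sY: "soff S (Y k) = soff S A"
      proof -
        have "soff S (Y k) = (\<Sum>j\<in>S. \<Sum>l\<in>S-{j}. Y k j l)" by (simp add: soff_def)
        also have "\<dots> = (\<Sum>j\<in>S. \<Sum>l\<in>S-{j}. A j l)"
        proof (rule sum.cong[OF refl])
          fix j assume jS: "j \<in> S"
          show "(\<Sum>l\<in>S-{j}. Y k j l) = (\<Sum>l\<in>S-{j}. A j l)"
          proof (cases "j = i")
            case True
            have "(\<Sum>l\<in>S-{j}. Y k j l) = (\<Sum>l\<in>S-{i}. if l = k then r else 0)"
              using True by (simp add: Y_def)
            also have "\<dots> = r" using fS kS by simp
            finally show ?thesis using True by (simp add: r_def)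
          qed (simp add: Y_def)
        qed
        finally show ?thesis by (simp add: soff_def)
      qed
      have "P S (CA (Y k)) \<le> fb (soff S (Y k))"
      proof (rule insert.IH[OF fS])
        show "T \<subseteq> S" using TS by auto
        show "\<And>j l. j \<in> S \<Longrightarrow> l \<in> S \<Longrightarrow> j \<noteq> l \<Longrightarrow> 0 \<le> Y k j l"
          using nn r0 by (auto simp: Y_def)
        show "(\<Sum>l\<in>S-{j}. Y k j l) \<le> 1" if "j \<in> S" for j
        proof (cases "j = i")
          case True
          have "(\<Sum>l\<in>S-{j}. Y k j l) = (\<Sum>l\<in>S-{i}. if l = k then r else 0)"
            using True by (simp add: Y_def)
          also have "\<dots> = r" using fS kS by simp
          finally show ?thesis using rs[OF iS] by (simp add: r_def)
        qed (use rs that in \<open>simp add: Y_def\<close>)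
        show "rowf S (Y k) j" if "j \<in> S - T" for j
        proof (cases "j = i")
          case True then show ?thesis unfolding rowf_def by (auto simp: Y_def intro!: exI[of _ k])
        next
          case False
          then have "rowf S A j" using rf that by auto
          then show ?thesis using False by (simp add: rowf_def Y_def)
        qed
      qed
      then show ?thesis using sY by simp
    qed
    have "P S (CA A) \<le> (\<Sum>k\<in>S-{i}. (A i k / r) * fb (soff S A))"
      unfolding lin using bnd nn iS r0 by (intro sum_mono mult_left_mono) auto
    also have "\<dots> = fb (soff S A)"
      using r0 by (simp add: sum_distrib_right[symmetric] sum_divide_distrib[symmetric] r_def)
    finally show ?thesis .
  qed
qed

lemma general_bound:
  assumes fS: "finite S"
    and nn: "\<And>i k. i \<in> S \<Longrightarrow> k \<in> S \<Longrightarrow> i \<noteq> k \<Longrightarrow> 0 \<le> A i k"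
    and rs: "\<And>i. i \<in> S \<Longrightarrow> (\<Sum>k\<in>S-{i}. A i k) \<le> 1"
  shows "P S (CA A) \<le> fb (soff S A)"
  using red_bound[OF fS fS] nn rs by auto




lemma upper:
  assumes A: "A \<in> tilde_omega n s"
  shows "per n (msub idm A) \<le> fb s"
proof -
  let ?S = "{..<n}"
  have nn: "\<And>i k. i < n \<Longrightarrow> k < n \<Longrightarrow> 0 \<le> A i k" and rs: "\<And>i. i < n \<Longrightarrow> (\<Sum>k<n. A i k) \<le> 1"
    and ms: "msum n A = s"
    using A by (auto simp: tilde_omega_def row_substochastic_def)
  have dg: "A i i \<le> 1" if "i < n" for i
  proof -
    have "A i i \<le> (\<Sum>k<n. A i k)" using that nn by (intro member_le_sum) auto
    then show ?thesis using rs[OF that] by simp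
  qed
  have "per n (msub idm A) \<le> P ?S (CA A)"
    unfolding per_P P_def
  proof (rule sum_mono)
    fix p assume "p \<in> {p. p permutes ?S}"
    then have p: "p permutes ?S" by simp
    have pin: "\<And>i. i < n \<Longrightarrow> p i < n" using permutes_in_image[OF p] by simp
    have "(\<Prod>i\<in>?S. msub idm A i (p i)) \<le> \<bar>\<Prod>i\<in>?S. msub idm A i (p i)\<bar>" by simp
    also have "\<dots> = (\<Prod>i\<in>?S. \<bar>msub idm A i (p i)\<bar>)" by (rule abs_prod)
    also have "\<dots> \<le> (\<Prod>i\<in>?S. CA A i (p i))"
    proof (rule prod_mono)
      fix i assume "i \<in> ?S"
      then have i: "i < n" by simp
      show "0 \<le> \<bar>msub idm A i (p i)\<bar> \<and> \<bar>msub idm A i (p i)\<bar> \<le> CA A i (p i)"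
        using nn[OF i pin[OF i]] dg[OF i] by (auto simp: msub_def idm_def CA_def)
    qed
    finally show "(\<Prod>i\<in>?S. msub idm A i (p i)) \<le> (\<Prod>i\<in>?S. CA A i (p i))" .
  qed
  also have "\<dots> \<le> fb (soff ?S A)"
  proof (rule general_bound)
    show "(\<Sum>k\<in>?S-{i}. A i k) \<le> 1" if "i \<in> ?S" for i
    proof -
      have "(\<Sum>k\<in>?S-{i}. A i k) \<le> (\<Sum>k\<in>?S. A i k)"
        using that nn by (intro sum_mono2) auto
      then show ?thesis using rs[of i] that by simp
    qed
  qed (use nn in auto)
  also have "\<dots> \<le> fb s"
  proof (rule fb_mono)
    show "0 \<le> soff ?S A" unfolding soff_def using nn by (auto intro!: sum_nonneg)
    have "soff ?S A \<le> (\<Sum>i\<in>?S. \<Sum>k\<in>?S. A i k)"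
      unfolding soff_def using nn by (intro sum_mono sum_mono2) auto
    then show "soff ?S A \<le> s" using ms by (simp add: msum_def)
  qed
  finally show ?thesis .
qed




lemma tail_form: "dsum 2 (S2 c) zero_mat i j = (if i \<noteq> j \<and> i div 2 = j div 2 then (if i < 2 then c else 0) else 0)"
  by (auto simp: dsum_def S2_def zero_mat_def)

lemma Wform: "copies2 k M2 (dsum 2 (S2 c) zero_mat) i j =
   (if i \<noteq> j \<and> i div 2 = j div 2 then (if i < 2*k then 1 else if i < 2*k+2 then c else 0) else 0)"
proof (induction k arbitrary: i j)
  case 0
  then show ?case by (simp add: tail_form)
next
  case (Suc k)
  show ?case
  proof (cases "i < 2 \<and> j < 2")
    case True
    then show ?thesis by (auto simp: dsum_def M2_def)
  next
    case F1: False
    show ?thesis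
    proof (cases "2 \<le> i \<and> 2 \<le> j")
      case True
      have "copies2 (Suc k) M2 (dsum 2 (S2 c) zero_mat) i j = copies2 k M2 (dsum 2 (S2 c) zero_mat) (i-2) (j-2)"
        using True by (simp add: dsum_def)
      also have "\<dots> = (if i - 2 \<noteq> j - 2 \<and> (i-2) div 2 = (j-2) div 2 then (if i - 2 < 2*k then 1 else if i - 2 < 2*k+2 then c else 0) else 0)"
        by (rule Suc.IH)
      also have "\<dots> = (if i \<noteq> j \<and> i div 2 = j div 2 then (if i < 2*Suc k then 1 else if i < 2*Suc k+2 then c else 0) else 0)"
      proof -
        have e1: "(i - 2 \<noteq> j - 2 \<and> (i-2) div 2 = (j-2) div 2) = (i \<noteq> j \<and> i div 2 = j div 2)"
        proof -
          obtain i' j' where ij: "i = i' + 2" "j = j' + 2" using True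
            by (metis add.commute le_Suc_ex)
          show ?thesis unfolding ij by simp
        qed
        have e2: "(i - 2 < 2*k) = (i < 2*Suc k)" "(i - 2 < 2*k+2) = (i < 2*Suc k + 2)" using True by auto
        show ?thesis unfolding e1 e2 ..
      qed
      finally show ?thesis .
    next
      case False
      have d: "x < 2 \<Longrightarrow> x div 2 = 0" "2 \<le> x \<Longrightarrow> 1 \<le> x div 2" for x :: nat
        by (simp, metis div_le_mono div_self zero_neq_numeral)
      have "i div 2 \<noteq> j div 2"
      proof (cases "i < 2")
        case True then have "2 \<le> j" using F1 False by auto
        then show ?thesis using d[of i] d[of j] True by auto
      next
        case False then have "j < 2" using F1 \<open>\<not> (2 \<le> i \<and> 2 \<le> j)\<close> by auto
        then show ?thesis using d[of i] d[of j] False by auto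
      qed
      then show ?thesis using F1 False by (auto simp: dsum_def)
    qed
  qed
qed




lemma P_pair:
  assumes fS: "finite S" and aS: "a \<in> S" and bS: "b \<in> S" and ab: "a \<noteq> b"
    and ra: "\<And>k. k \<in> S \<Longrightarrow> k \<noteq> a \<Longrightarrow> k \<noteq> b \<Longrightarrow> X a k = 0"
    and ca: "\<And>k. k \<in> S \<Longrightarrow> k \<noteq> a \<Longrightarrow> k \<noteq> b \<Longrightarrow> X k a = 0"
    and cb: "\<And>k. k \<in> S \<Longrightarrow> k \<noteq> a \<Longrightarrow> k \<noteq> b \<Longrightarrow> X k b = 0"
  shows "P S X = (X a a * X b b + X a b * X b a) * P (S - {a, b}) X"
proof -
  define T where "T = S - {a}"
  have fT: "finite T" "a \<notin> T" "b \<in> T" using fS bS ab by (auto simp: T_def)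
  have S: "S = insert a T" using aS by (auto simp: T_def)
  have TB: "T - {b} = S - {a, b}" by (auto simp: T_def)
  have "P S X = X a a * P T X + (\<Sum>l\<in>T. X a l * P T (colrep X a l))"
    unfolding S by (rule P_expand) (use fT in auto)
  also have "(\<Sum>l\<in>T. X a l * P T (colrep X a l)) = (\<Sum>l\<in>T. if l = b then X a b * P T (colrep X a b) else 0)"
    by (rule sum.cong) (auto simp: T_def ra)
  also have "\<dots> = X a b * P T (colrep X a b)" using fT by simp
  also have "P T X = X b b * P (T - {b}) X"
    by (rule P_remove_col) (use fT cb in \<open>auto simp: T_def\<close>)
  also have "P T (colrep X a b) = colrep X a b b b * P (T - {b}) (colrep X a b)"
    by (rule P_remove_col) (use fT ca in \<open>auto simp: T_def colrep_def\<close>)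
  also have "P (T - {b}) (colrep X a b) = P (T - {b}) X"
    by (rule P_cong) (auto simp: colrep_def)
  finally show ?thesis unfolding TB by (simp add: colrep_def algebra_simps)
qed

lemma P_diag:
  assumes fS: "finite S" and off: "\<And>i k. i \<in> S \<Longrightarrow> k \<in> S \<Longrightarrow> i \<noteq> k \<Longrightarrow> X i k = 0"
  shows "P S X = (\<Prod>i\<in>S. X i i)"
  using fS off
proof (induction S rule: finite_induct)
  case empty then show ?case by simp
next
  case (insert x F)
  have "P (insert x F) X = X x x * P (insert x F - {x}) X"
    by (rule P_remove_col) (use insert in auto)
  also have "insert x F - {x} = F" using insert by auto
  finally show ?case using insert by simp
qed

lemma dv: "(j div 2 = q) = (j = 2*q \<or> j = 2*q+1)" for j q :: nat
  by auto

definition pt :: "nat \<Rightarrow> nat" where "pt i = (if even i then Suc i else i - 1)"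

lemma partner: "(i \<noteq> j \<and> i div 2 = j div 2) = (j = pt i)" for i j :: nat
proof (cases "even i")
  case True then obtain q where "i = 2*q" by auto
  then show ?thesis using dv[of j q] by (auto simp: pt_def)
next
  case False then obtain q where "i = 2*q+1" using oddE by blast
  then show ?thesis using dv[of j q] by (auto simp: pt_def)
qed

lemma attain:
  fixes K n :: nat and c :: real
  assumes c: "0 \<le> c" "c < 1" and Kn: "2*K \<le> n" and cn: "c \<noteq> 0 \<Longrightarrow> 2*K+2 \<le> n"
  defines "W \<equiv> copies2 K M2 (dsum 2 (S2 c) zero_mat)"
  shows "W \<in> tilde_omega n (2*K + 2*c) \<and> doubly_substochastic n W
     \<and> per n (msub idm W) = 2^K * (1 + c^2)"
proof -
  define g where "g i = (if i < 2*K then 1 else if i < 2*K+2 then c else 0)" for i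
  have Wf: "W i j = (if i \<noteq> j \<and> i div 2 = j div 2 then g i else 0)" for i j
    unfolding W_def Wform g_def ..
  have Wg: "W i j = (if j = pt i then g i else 0)" for i j
    unfolding Wf partner ..
  have lt: "(i < 2*m) = (i div 2 < m)" for i m :: nat
    by (simp add: div_less_iff_less_mult mult.commute)
  have lt2: "(i < 2*m+2) = (i div 2 < Suc m)" for i m :: nat
    using lt[of _ "Suc _"] by simp
  have gsame: "i div 2 = j div 2 \<Longrightarrow> g i = g j" for i j
    unfolding g_def lt lt2 by simp
  have Wsym: "W i j = W j i" for i j
    unfolding Wf using gsame[of i j] by (cases "i div 2 = j div 2") auto
  have g01: "0 \<le> g i" "g i \<le> 1" for i using c by (auto simp: g_def)
  have ptd: "pt i div 2 = i div 2" "pt i \<noteq> i" for i using partner[of i "pt i"] by auto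
  have ptlt: "pt i < n" if "g i \<noteq> 0" for i
  proof (cases "i < 2*K")
    case True then have "pt i < 2*K" unfolding lt ptd . then show ?thesis using Kn by simp
  next
    case False
    then have "c \<noteq> 0" "i < 2*K+2" using that by (auto simp: g_def split: if_splits)
    have "pt i < 2*K+2" using \<open>i < 2*K+2\<close> unfolding lt2 ptd .
    then show ?thesis using cn \<open>c \<noteq> 0\<close> by simp
  qed
  have rows: "(\<Sum>j<n. W i j) = g i" for i
  proof -
    have "(\<Sum>j<n. W i j) = (if pt i < n then g i else 0)" unfolding Wg by simp
    then show ?thesis using ptlt by (cases "g i = 0") auto
  qed
  have cols: "(\<Sum>i<n. W i j) = g j" for j
    using rows[of j] by (simp add: Wsym)
  have Wnn: "0 \<le> W i j" for i j using g01 by (simp add: Wg)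
  have rsub: "row_substochastic n W" unfolding row_substochastic_def rows using Wnn g01 by auto
  have dsub: "doubly_substochastic n W" unfolding doubly_substochastic_def cols using rsub g01 by auto
  have ms: "msum n W = 2*K + 2*c"
  proof -
    have "msum n W = (\<Sum>i<n. g i)" unfolding msum_def rows ..
    also have "\<dots> = (\<Sum>i<n. (if i < 2*K then 1 else 0) + (if 2*K \<le> i \<and> i < 2*K+2 then c else 0))"
      by (rule sum.cong) (auto simp: g_def)
    also have "\<dots> = (\<Sum>i<n. (if i < 2*K then 1 else 0)) + (\<Sum>i<n. (if 2*K \<le> i \<and> i < 2*K+2 then c else 0))"
      by (rule sum.distrib)
    also have "(\<Sum>i<n. (if i < 2*K then 1 else 0)) = real (2*K)"
    proof -
      have "(\<Sum>i<n. (if i < 2*K then 1 else 0)) = (\<Sum>i\<in>{i\<in>{..<n}. i < 2*K}. (1::real))"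
        by (rule sum.inter_filter[symmetric]) simp
      also have "{i\<in>{..<n}. i < 2*K} = {..<2*K}" using Kn by auto
      finally show ?thesis by simp
    qed
    also have "(\<Sum>i<n. (if 2*K \<le> i \<and> i < 2*K+2 then c else 0)) = 2*c"
    proof (cases "c = 0")
      case True then show ?thesis by (simp add: sum.neutral)
    next
      case False
      have "(\<Sum>i<n. (if 2*K \<le> i \<and> i < 2*K+2 then c else 0)) = (\<Sum>i\<in>{i\<in>{..<n}. 2*K \<le> i \<and> i < 2*K+2}. c)"
        by (rule sum.inter_filter[symmetric]) simp
      also have "{i\<in>{..<n}. 2*K \<le> i \<and> i < 2*K+2} = {2*K, 2*K+1}" using cn[OF False] by auto
      finally show ?thesis by simp
    qed
    finally show ?thesis by simp
  qed
  define X where "X = msub idm W"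
  have Xf: "X i k = (if i = k then 1 else if k = pt i then - g i else 0)" for i k
    using ptd[of i] by (auto simp: X_def msub_def idm_def Wg)
  have Xcol: "X k a = 0" if "k \<noteq> a" "k \<noteq> pt a" for k a
  proof -
    have "a \<noteq> pt k" using that partner[of k a] partner[of a k] by auto
    then show ?thesis using that by (simp add: Xf)
  qed
  have step: "P {2*m..<n} X = 2 * P {2*(Suc m)..<n} X" if m: "m < K" for m
  proof -
    have ev: "pt (2*m) = 2*m+1" "pt (2*m+1) = 2*m" by (auto simp: pt_def)
    have "P {2*m..<n} X = (X (2*m) (2*m) * X (2*m+1) (2*m+1) + X (2*m) (2*m+1) * X (2*m+1) (2*m)) * P ({2*m..<n} - {2*m, 2*m+1}) X"
    proof (rule P_pair)
      show "2*m+1 \<in> {2*m..<n}" using m Kn by auto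
      show "2*m \<in> {2*m..<n}" using m Kn by auto
      show "finite {2*m..<n}" by simp
      show "2*m \<noteq> 2*m+1" by simp
      fix k assume k: "k \<in> {2*m..<n}" "k \<noteq> 2*m" "k \<noteq> 2*m+1"
      then show "X (2*m) k = 0" by (simp add: Xf pt_def)
      show "X k (2*m) = 0" by (rule Xcol) (use k in \<open>simp_all add: pt_def\<close>)
      show "X k (2*m+1) = 0" by (rule Xcol) (use k in \<open>simp_all add: pt_def\<close>)
    qed
    also have "{2*m..<n} - {2*m, 2*m+1} = {2*(Suc m)..<n}" by auto
    also have "X (2*m) (2*m) * X (2*m+1) (2*m+1) + X (2*m) (2*m+1) * X (2*m+1) (2*m) = 2"
      using m by (simp add: Xf pt_def g_def)
    finally show ?thesis .
  qed
  have iter: "d \<le> K \<Longrightarrow> P {2*(K-d)..<n} X = 2^d * P {2*K..<n} X" for d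
  proof (induction d)
    case 0 then show ?case by simp
  next
    case (Suc d)
    have "P {2*(K - Suc d)..<n} X = 2 * P {2*(Suc (K - Suc d))..<n} X"
      using Suc.prems by (intro step) auto
    also have "Suc (K - Suc d) = K - d" using Suc.prems by simp
    finally show ?case using Suc by simp
  qed
  have idpart: "P {m..<n} X = 1" if "2*K+2 \<le> m \<or> (c = 0 \<and> 2*K \<le> m)" for m
  proof -
    have "P {m..<n} X = (\<Prod>i\<in>{m..<n}. X i i)"
    proof (rule P_diag)
      fix i k assume "i \<in> {m..<n}" "k \<in> {m..<n}" "i \<noteq> k"
      then have "g i = 0" using that by (auto simp: g_def)
      then show "X i k = 0" using \<open>i \<noteq> k\<close> by (simp add: Xf)
    qed simp
    also have "\<dots> = 1" by (simp add: Xf)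
    finally show ?thesis .
  qed
  have tailv: "P {2*K..<n} X = 1 + c^2"
  proof (cases "c = 0")
    case True then show ?thesis using idpart by simp
  next
    case False
    have ev: "pt (2*K) = 2*K+1" "pt (2*K+1) = 2*K" by (auto simp: pt_def)
    have "P {2*K..<n} X = (X (2*K) (2*K) * X (2*K+1) (2*K+1) + X (2*K) (2*K+1) * X (2*K+1) (2*K)) * P ({2*K..<n} - {2*K, 2*K+1}) X"
    proof (rule P_pair)
      show "2*K+1 \<in> {2*K..<n}" using cn[OF False] by auto
      show "2*K \<in> {2*K..<n}" using cn[OF False] by auto
      show "finite {2*K..<n}" by simp
      show "2*K \<noteq> 2*K+1" by simp
      fix k assume k: "k \<in> {2*K..<n}" "k \<noteq> 2*K" "k \<noteq> 2*K+1"
      then show "X (2*K) k = 0" by (simp add: Xf pt_def)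
      show "X k (2*K) = 0" by (rule Xcol) (use k in \<open>simp_all add: pt_def\<close>)
      show "X k (2*K+1) = 0" by (rule Xcol) (use k in \<open>simp_all add: pt_def\<close>)
    qed
    also have "{2*K..<n} - {2*K, 2*K+1} = {2*K+2..<n}" by auto
    also have "P {2*K+2..<n} X = 1" by (rule idpart) simp
    also have "X (2*K) (2*K) * X (2*K+1) (2*K+1) + X (2*K) (2*K+1) * X (2*K+1) (2*K) = 1 + c^2"
      by (simp add: Xf pt_def g_def power2_eq_square)
    finally show ?thesis by simp
  qed
  have "per n (msub idm W) = 2^K * (1 + c^2)"
    using iter[of K] tailv by (simp add: per_P X_def atLeast0LessThan)
  then show ?thesis using rsub dsub ms by (simp add: tilde_omega_def)
qed




theorem mainTheorem12:
  fixes n :: nat and s :: real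
  assumes "n \<ge> 1" and "s \<ge> 0"
    and "(even n \<and> s \<le> real n) \<or> (odd n \<and> s \<le> real n - 1)"
  defines "e \<equiv> greatest_even_le s"
  defines "W \<equiv> copies2 (nat (e div 2)) M2 (dsum 2 (S2 ((s - real_of_int e) / 2)) zero_mat)"
  shows "(\<forall>A\<in>tilde_omega n s.
            per n (msub idm A) \<le> 2 ^ nat (e div 2) * (1 + ((s - real_of_int e) / 2)^2))
         \<and> W \<in> tilde_omega n s \<and> doubly_substochastic n W
         \<and> per n (msub idm W) = 2 ^ nat (e div 2) * (1 + ((s - real_of_int e) / 2)^2)"
proof -
  have fs: "fb s = 2 ^ nat (e div 2) * (1 + ((s - real_of_int e) / 2)^2)"
    unfolding fb_def e_def ..
  have part1: "\<forall>A\<in>tilde_omega n s. per n (msub idm A) \<le> 2 ^ nat (e div 2) * (1 + ((s - real_of_int e) / 2)^2)"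
    using upper[of _ n s] unfolding fs by blast
  define q where "q = \<lfloor>s/2\<rfloor>"
  define K where "K = nat q"
  define c where "c = (s - real_of_int e) / 2"
  have q0: "0 \<le> q" unfolding q_def using assms(2) by simp
  have eq: "e = 2 * q" unfolding e_def q_def by (rule ge_alt)
  have K: "nat (e div 2) = K" unfolding K_def eq by simp
  have Kq: "real K = real_of_int q" unfolding K_def using q0 by simp
  have qs: "real_of_int q \<le> s/2" "s/2 < real_of_int q + 1" unfolding q_def by linarith+
  have c01: "0 \<le> c" "c < 1" unfolding c_def eq using qs by auto
  have sc: "s = real (2*K) + 2*c" unfolding c_def eq using Kq by (simp add: field_simps)
  have Kn: "2*K \<le> n"
  proof -
    have "real (2*K) \<le> real n" using sc c01 assms(3) by auto
    then show ?thesis by linarith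
  qed
  have cn: "2*K+2 \<le> n" if "c \<noteq> 0"
  proof -
    have cp: "0 < c" using that c01 by simp
    show ?thesis
    proof (cases "even n")
      case True
      then obtain t where t: "n = 2*t" by auto
      have "real (2*K) < real n" using sc cp assms(3) True by auto
      then have "K < t" using t by simp
      then show ?thesis using t by simp
    next
      case False
      then obtain t where t: "n = 2*t+1" using oddE by blast
      have "real (2*K) < real n - 1" using sc cp assms(3) False by auto
      then have "K < t" using t by simp
      then show ?thesis using t by simp
    qed
  qed
  have at: "W \<in> tilde_omega n (2*K + 2*c) \<and> doubly_substochastic n W
     \<and> per n (msub idm W) = 2^K * (1 + c^2)"
    unfolding W_def K c_def[symmetric] by (rule attain[OF c01 Kn cn])
  have s2: "2*K + 2*c = s" using sc by simp
  show ?thesis using part1 at s2 unfolding K c_def[symmetric] by simp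
qed


end
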